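(* Let $n\ge m\ge 2$ be integers. Consider any optimal solution of the shifting-checkers game with $n$ black and $m$ white checkers whose first move is the slide of the white checker at position $n+2$ to the left into position $n+1$ (producing $\xi_1=b^nwOw^{m-1}$). For $1\le t\le m$ define $$\lambda_t=\begin{cases} b^{n-t}(wb)^tOw^{m-t} & t \text{ even},\\ b^{n-t}O(wb)^tw^{m-t} & t\text{ odd}.\end{cases}$$ Then this optimal solution passes through all of the configurations $\lambda_1,\lambda_2,\dots,\lambda_m$, and for each $1\le i\le m-1$ the portion of the move sequence leading from $\lambda_i$ to $\lambda_{i+1}$ is the same for all such optimal solutions (the shortest path from $\lambda_i$ to $\lambda_{i+1}$ is unique).
   Context: The game: positions $1,\dots,n+m+1$ in a row, each holding a black checker ($b$), a white checker ($w$) or nothing, with exactly one empty position (the vacancy $O$); configurations are written as words over $\{b,w,O\}$, exponents denoting repetition. Initial configuration $b^nOw^m$, final configuration $w^mOb^n$. A legal move is a slide (a checker adjacent to the vacancy moves into it) or a jump (a checker at distance two from the vacancy jumps over the checker between them into it), in either direction. An optimal solution is a sequence of legal moves from the initial to the final configuration of minimum length (this minimum is $nm+n+m$). *)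

theory Defs
  imports Main
begin

datatype cell = Bk | Wh | Vac

type_synonym config = "cell list"

text \<open>A legal move: a checker at list index j moves into the vacancy at index i,
  either a slide (distance 1) or a jump over a checker (distance 2).
  List index k corresponds to position k+1.\<close>
definition legal_move :: "config \<Rightarrow> config \<Rightarrow> bool" where
  "legal_move c c' \<longleftrightarrow>
     (\<exists>i j. i < length c \<and> j < length c \<and> c ! i = Vac \<and> c ! j \<noteq> Vac \<and>
        ((i = j + 1 \<or> j = i + 1) \<or>
         ((i = j + 2 \<or> j = i + 2) \<and> c ! ((i + j) div 2) \<noteq> Vac)) \<and>
        c' = c[i := c ! j, j := Vac])"

definition init_config :: "nat \<Rightarrow> nat \<Rightarrow> config" where
  "init_config n m = replicate n Bk @ [Vac] @ replicate m Wh"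

definition final_config :: "nat \<Rightarrow> nat \<Rightarrow> config" where
  "final_config n m = replicate m Wh @ [Vac] @ replicate n Bk"

text \<open>A solution is the list of visited configurations; its number of moves is length - 1.\<close>
definition is_solution :: "nat \<Rightarrow> nat \<Rightarrow> config list \<Rightarrow> bool" where
  "is_solution n m p \<longleftrightarrow> p \<noteq> [] \<and> hd p = init_config n m \<and> last p = final_config n m \<and>
     (\<forall>k. k + 1 < length p \<longrightarrow> legal_move (p ! k) (p ! (k + 1)))"

definition is_optimal :: "nat \<Rightarrow> nat \<Rightarrow> config list \<Rightarrow> bool" where
  "is_optimal n m p \<longleftrightarrow> is_solution n m p \<and>
     (\<forall>q. is_solution n m q \<longrightarrow> length p \<le> length q)"

definition xi1 :: "nat \<Rightarrow> nat \<Rightarrow> config" where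
  "xi1 n m = replicate n Bk @ [Wh, Vac] @ replicate (m - 1) Wh"

definition lam :: "nat \<Rightarrow> nat \<Rightarrow> nat \<Rightarrow> config" where
  "lam n m t = (if even t
     then replicate (n - t) Bk @ concat (replicate t [Wh, Bk]) @ [Vac] @ replicate (m - t) Wh
     else replicate (n - t) Bk @ [Vac] @ concat (replicate t [Wh, Bk]) @ replicate (m - t) Wh)"

end

theory Submission
  imports Defs
begin


definition nb :: "cell list \<Rightarrow> nat" where "nb xs = length (filter (\<lambda>z. z = Bk) xs)"
definition nw :: "cell list \<Rightarrow> nat" where "nw xs = length (filter (\<lambda>z. z = Wh) xs)"

fun ninv :: "cell list \<Rightarrow> nat" where
  "ninv [] = 0"
| "ninv (c # cs) = (if c = Bk then nw cs else 0) + ninv cs"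

fun prs :: "cell \<Rightarrow> cell \<Rightarrow> cell list \<Rightarrow> nat" where
  "prs a b (c1 # c2 # cs) = (if c1 = a \<and> c2 = a \<and> b \<in> set cs then 1 else 0) + prs a b (c2 # cs)"
| "prs a b _ = 0"

definition lead :: "cell \<Rightarrow> cell list \<Rightarrow> nat" where
  "lead a xs = length (takeWhile (\<lambda>z. z = a) xs)"

definition hp :: "cell list \<Rightarrow> cell list \<Rightarrow> int" where
  "hp xr y = int (ninv (rev xr @ y) + nb xr + nw y + prs Wh Bk xr + prs Bk Wh y)
     - (if Wh \<notin> set y then int (lead Bk xr div 2) else 0)
     - (if Bk \<notin> set xr then int (lead Wh y div 2) else 0)"

lemma nb_simps[simp]: "nb [] = 0" "nb (c # xs) = (if c = Bk then 1 else 0) + nb xs"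
  "nb (xs @ ys) = nb xs + nb ys" "nb (rev xs) = nb xs"
  by (auto simp: nb_def rev_filter[symmetric])
lemma nw_simps[simp]: "nw [] = 0" "nw (c # xs) = (if c = Wh then 1 else 0) + nw xs"
  "nw (xs @ ys) = nw xs + nw ys" "nw (rev xs) = nw xs"
  by (auto simp: nw_def rev_filter[symmetric])

lemma inv_append[simp]: "ninv (xs @ ys) = ninv xs + ninv ys + nb xs * nw ys"
  by (induction xs) (auto simp: algebra_simps)

lemma lead_simps[simp]: "lead a [] = 0" "lead a (c # xs) = (if c = a then Suc (lead a xs) else 0)"
  by (auto simp: lead_def)

lemma prs_Cons: "prs a b (c # xs) = (if c = a \<and> xs \<noteq> [] \<and> hd xs = a \<and> b \<in> set (tl xs) then 1 else 0) + prs a b xs"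
  by (cases xs) auto

lemma dSLb: "hp xr (Bk # y) = hp (Bk # xr) y - 1 + (if Wh \<in> set y \<and> hd y = Bk then 1 else 0)
   + (if Wh \<notin> set y \<and> odd (lead Bk xr) then 1 else 0)"
  by (cases y) (auto simp: hp_def prs_Cons)

lemma dSLw: "hp xr (Wh # y) = hp (Wh # xr) y + 1 - (if Bk \<in> set xr \<and> hd xr = Wh then 1 else 0)
   - (if Bk \<notin> set xr \<and> odd (lead Wh y) then 1 else 0)"
  by (cases xr) (auto simp: hp_def prs_Cons)

lemma dJbb: "hp xr (Bk # Bk # y) = hp (Bk # Bk # xr) y - 1 + (if Wh \<in> set y \<and> hd y = Bk then 1 else 0)"
  by (cases y) (auto simp: hp_def prs_Cons)

lemma dJww: "hp xr (Wh # Wh # y) = hp (Wh # Wh # xr) y + 1 - (if Bk \<in> set xr \<and> hd xr = Wh then 1 else 0)"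
  by (cases xr) (auto simp: hp_def prs_Cons)

lemma dJwb: "hp xr (Wh # Bk # y) = hp (Wh # Bk # xr) y - 1 + (if Wh \<in> set y \<and> hd y = Bk then 1 else 0)"
  by (cases y) (auto simp: hp_def prs_Cons)

lemma dJbw: "hp xr (Bk # Wh # y) = hp (Bk # Wh # xr) y + 1 - (if Bk \<in> set xr \<and> hd xr = Wh then 1 else 0)"
  by (cases xr) (auto simp: hp_def prs_Cons)



definition H :: "cell list \<Rightarrow> int" where
  "H c = hp (rev (takeWhile (\<lambda>z. z \<noteq> Vac) c)) (tl (dropWhile (\<lambda>z. z \<noteq> Vac) c))"

lemma H_eq: "Vac \<notin> set x \<Longrightarrow> H (x @ Vac # y) = hp (rev x) y"
  by (simp add: H_def takeWhile_append dropWhile_append)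

lemma lm_SL: "a \<noteq> Vac \<Longrightarrow> legal_move (A @ [a, Vac] @ B) (A @ [Vac, a] @ B)"
  unfolding legal_move_def
  apply (rule exI[of _ "length A + 1"], rule exI[of _ "length A"])
  by (simp add: nth_append list_update_append)

lemma lm_SR: "a \<noteq> Vac \<Longrightarrow> legal_move (A @ [Vac, a] @ B) (A @ [a, Vac] @ B)"
  unfolding legal_move_def
  apply (rule exI[of _ "length A"], rule exI[of _ "length A + 1"])
  by (simp add: nth_append list_update_append)

lemma lm_JL: "a1 \<noteq> Vac \<Longrightarrow> a2 \<noteq> Vac \<Longrightarrow> legal_move (A @ [a2, a1, Vac] @ B) (A @ [Vac, a1, a2] @ B)"
  unfolding legal_move_def
  apply (rule exI[of _ "length A + 2"], rule exI[of _ "length A"])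
  by (simp add: nth_append list_update_append)

lemma lm_JR: "a1 \<noteq> Vac \<Longrightarrow> a2 \<noteq> Vac \<Longrightarrow> legal_move (A @ [Vac, a1, a2] @ B) (A @ [a2, a1, Vac] @ B)"
  unfolding legal_move_def
  apply (rule exI[of _ "length A"], rule exI[of _ "length A + 2"])
  by (simp add: nth_append list_update_append)

lemma vac_idx: assumes "Vac \<notin> set x" "Vac \<notin> set y" "i < length (x @ Vac # y)" "(x @ Vac # y) ! i = Vac"
  shows "i = length x"
proof (rule ccontr)
  assume "i \<noteq> length x"
  then consider "i < length x" | "i > length x" by linarith
  then show False
  proof cases
    case 1 then have "x ! i = Vac" using assms(4) by (simp add: nth_append)
    then show False using 1 assms(1) nth_mem by fastforce
  next
    case 2 then have "y ! (i - length x - 1) = Vac" using assms(4) by (simp add: nth_append nth_Cons')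
    moreover have "i - length x - 1 < length y" using 2 assms(3) by simp
    ultimately show False using assms(2) nth_mem by fastforce
  qed
qed

lemma move_cases:
  assumes "legal_move (rev xr @ Vac # y) c'" "Vac \<notin> set xr" "Vac \<notin> set y"
  shows "(\<exists>a xr0. xr = a # xr0 \<and> c' = rev xr0 @ Vac # a # y)
       \<or> (\<exists>a y0. y = a # y0 \<and> c' = rev (a # xr) @ Vac # y0)
       \<or> (\<exists>a1 a2 xr0. xr = a1 # a2 # xr0 \<and> c' = rev xr0 @ Vac # a1 # a2 # y)
       \<or> (\<exists>a1 a2 y0. y = a1 # a2 # y0 \<and> c' = rev (a1 # a2 # xr) @ Vac # y0)"
proof -
  let ?c = "rev xr @ Vac # y"
  obtain i j where ij: "i < length ?c" "j < length ?c" "?c ! i = Vac" "?c ! j \<noteq> Vac"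
    "(i = j + 1 \<or> j = i + 1) \<or> ((i = j + 2 \<or> j = i + 2) \<and> ?c ! ((i + j) div 2) \<noteq> Vac)"
    "c' = ?c[i := ?c ! j, j := Vac]"
    using assms(1) unfolding legal_move_def by blast
  have vi: "i = length xr" using vac_idx[of "rev xr" y i] ij assms by simp
  consider "i = j + 1" | "j = i + 1" | "i = j + 2" | "j = i + 2" using ij(5) by blast
  then show ?thesis
  proof cases
    case 1
    then obtain a xr0 where xr: "xr = a # xr0" using vi by (cases xr) auto
    have "c' = rev xr0 @ Vac # a # y" using ij(6) 1 vi xr
      by (simp add: nth_append list_update_append)
    then show ?thesis using xr by blast
  next
    case 2
    then obtain a y0 where yy: "y = a # y0" using vi ij(2) by (cases y) auto
    have "c' = rev (a # xr) @ Vac # y0" using ij(6) 2 vi yy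
      by (simp add: nth_append list_update_append)
    then show ?thesis using yy by blast
  next
    case 3
    then obtain a1 a2 xr0 where xr: "xr = a1 # a2 # xr0" using vi
      by (cases xr; cases "tl xr") auto
    have "c' = rev xr0 @ Vac # a1 # a2 # y" using ij(6) 3 vi xr
      by (simp add: nth_append list_update_append)
    then show ?thesis using xr by blast
  next
    case 4
    then obtain a1 a2 y0 where yy: "y = a1 # a2 # y0" using vi ij(2)
      by (cases y; cases "tl y") auto
    have "c' = rev (a1 # a2 # xr) @ Vac # y0" using ij(6) 4 vi yy
      by (simp add: nth_append list_update_append)
    then show ?thesis using yy by blast
  qed
qed



definition gd :: "cell list \<Rightarrow> bool" where
  "gd c \<longleftrightarrow> (\<exists>x y. c = x @ Vac # y \<and> Vac \<notin> set x \<and> Vac \<notin> set y)"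

lemma cell_cases: "a \<noteq> Vac \<Longrightarrow> a = Bk \<or> a = Wh" by (cases a) auto

lemma step_gen:
  assumes "legal_move (rev xr @ Vac # y) c'" "Vac \<notin> set xr" "Vac \<notin> set y"
  shows "\<exists>xr' y'. c' = rev xr' @ Vac # y' \<and> Vac \<notin> set xr' \<and> Vac \<notin> set y' \<and> \<bar>hp xr' y' - hp xr y\<bar> \<le> 1"
  using move_cases[OF assms]
proof (elim disjE exE conjE)
  fix a xr0 assume h: "xr = a # xr0" "c' = rev xr0 @ Vac # a # y"
  have "a = Bk \<or> a = Wh" using h assms by (intro cell_cases) auto
  then have "\<bar>hp xr0 (a # y) - hp xr y\<bar> \<le> 1" using h by (auto simp: dSLb dSLw)
  then show ?thesis using h assms by (intro exI[of _ xr0] exI[of _ "a # y"]) auto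
next
  fix a y0 assume h: "y = a # y0" "c' = rev (a # xr) @ Vac # y0"
  have "a = Bk \<or> a = Wh" using h assms by (intro cell_cases) auto
  then have "\<bar>hp (a # xr) y0 - hp xr y\<bar> \<le> 1" using h by (auto simp: dSLb dSLw)
  then show ?thesis using h assms by (intro exI[of _ "a # xr"] exI[of _ "y0"]) auto
next
  fix a1 a2 xr0 assume h: "xr = a1 # a2 # xr0" "c' = rev xr0 @ Vac # a1 # a2 # y"
  have "a1 \<noteq> Vac" "a2 \<noteq> Vac" using h assms by auto
  then have "\<bar>hp xr0 (a1 # a2 # y) - hp xr y\<bar> \<le> 1" using h by (cases a1; cases a2) (auto simp: dJbb dJww dJwb dJbw)
  then show ?thesis using h assms by (intro exI[of _ xr0] exI[of _ "a1 # a2 # y"]) auto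
next
  fix a1 a2 y0 assume h: "y = a1 # a2 # y0" "c' = rev (a1 # a2 # xr) @ Vac # y0"
  have "a1 \<noteq> Vac" "a2 \<noteq> Vac" using h assms by auto
  then have "\<bar>hp (a1 # a2 # xr) y0 - hp xr y\<bar> \<le> 1" using h by (cases a1; cases a2) (auto simp: dJbb dJww dJwb dJbw)
  then show ?thesis using h assms by (intro exI[of _ "a1 # a2 # xr"] exI[of _ "y0"]) auto
qed

lemma step: assumes "legal_move c c'" "gd c" shows "gd c' \<and> \<bar>H c' - H c\<bar> \<le> 1"
proof -
  obtain x y where c: "c = x @ Vac # y" "Vac \<notin> set x" "Vac \<notin> set y" using assms(2) gd_def by auto
  have "legal_move (rev (rev x) @ Vac # y) c'" using assms(1) c by simp
  from step_gen[OF this] c obtain xr' y' where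
    r: "c' = rev xr' @ Vac # y'" "Vac \<notin> set xr'" "Vac \<notin> set y'" "\<bar>hp xr' y' - hp (rev x) y\<bar> \<le> 1"
    by auto
  have "gd c'" unfolding gd_def using r by (intro exI[of _ "rev xr'"] exI[of _ y']) auto
  moreover have "H c' = hp xr' y'" using r by (simp add: H_eq)
  moreover have "H c = hp (rev x) y" using c by (simp add: H_eq)
  ultimately show ?thesis using r by simp
qed

definition chain :: "cell list list \<Rightarrow> bool" where
  "chain p \<longleftrightarrow> (\<forall>k. k + 1 < length p \<longrightarrow> legal_move (p ! k) (p ! (k + 1)))"

lemma chain_gd_bound:
  assumes "chain p" "gd (p ! 0)" "p \<noteq> []"
  shows "l < length p \<Longrightarrow> k \<le> l \<Longrightarrow> gd (p ! l) \<and> \<bar>H (p ! l) - H (p ! k)\<bar> \<le> int (l - k)"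
proof (induction l arbitrary: k)
  case 0 then show ?case using assms by simp
next
  case (Suc l)
  have g: "gd (p ! l)" using Suc.IH[of 0] Suc.prems by simp
  have mv: "legal_move (p ! l) (p ! Suc l)" using assms(1) Suc.prems unfolding chain_def by simp
  have st: "gd (p ! Suc l) \<and> \<bar>H (p ! Suc l) - H (p ! l)\<bar> \<le> 1" using step[OF mv g] .
  show ?case
  proof (cases "k = Suc l")
    case True then show ?thesis using st by simp
  next
    case False
    then have "\<bar>H (p ! l) - H (p ! k)\<bar> \<le> int (l - k)" using Suc by simp
    then show ?thesis using st False Suc.prems by auto
  qed
qed



definition tight :: "cell list \<Rightarrow> cell list \<Rightarrow> bool" where
  "tight c c' \<longleftrightarrow> legal_move c c' \<and> H c' = H c - 1"

lemma tight_cases: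
  assumes "tight (rev xr @ Vac # y) c'" "Vac \<notin> set xr" "Vac \<notin> set y"
  shows "(\<exists>xr0. xr = Bk # xr0 \<and> c' = rev xr0 @ Vac # Bk # y \<and> \<not>(Wh \<in> set y \<and> hd y = Bk) \<and> \<not>(Wh \<notin> set y \<and> odd (lead Bk xr0)))
  \<or> (\<exists>y0. y = Wh # y0 \<and> c' = rev (Wh # xr) @ Vac # y0 \<and> \<not>(Bk \<in> set xr \<and> hd xr = Wh) \<and> \<not>(Bk \<notin> set xr \<and> odd (lead Wh y0)))
  \<or> (\<exists>a xr0. a \<noteq> Vac \<and> xr = a # Bk # xr0 \<and> c' = rev xr0 @ Vac # a # Bk # y \<and> \<not>(Wh \<in> set y \<and> hd y = Bk))
  \<or> (\<exists>a y0. a \<noteq> Vac \<and> y = a # Wh # y0 \<and> c' = rev (a # Wh # xr) @ Vac # y0 \<and> \<not>(Bk \<in> set xr \<and> hd xr = Wh))"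
proof -
  have lm: "legal_move (rev xr @ Vac # y) c'" and hh: "H c' = hp xr y - 1"
    using assms(1) assms(2) by (auto simp: tight_def H_eq)
  show ?thesis using move_cases[OF lm assms(2,3)]
  proof (elim disjE exE conjE)
    fix a xr0 assume h: "xr = a # xr0" "c' = rev xr0 @ Vac # a # y"
    have "H c' = hp xr0 (a # y)" using h assms by (simp add: H_eq)
    moreover have "a \<noteq> Vac" using h assms by auto
    ultimately show ?thesis using hh h by (cases a) (auto simp: dSLb dSLw split: if_splits)
  next
    fix a y0 assume h: "y = a # y0" "c' = rev (a # xr) @ Vac # y0"
    have "H c' = hp (a # xr) y0" using H_eq[of "rev (a # xr)" y0] h assms by simp
    moreover have "a \<noteq> Vac" using h assms by auto
    ultimately show ?thesis using hh h by (cases a) (auto simp: dSLb dSLw split: if_splits)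
  next
    fix a1 a2 xr0 assume h: "xr = a1 # a2 # xr0" "c' = rev xr0 @ Vac # a1 # a2 # y"
    have "H c' = hp xr0 (a1 # a2 # y)" using h assms by (simp add: H_eq)
    moreover have "a1 \<noteq> Vac" "a2 \<noteq> Vac" using h assms by auto
    ultimately show ?thesis using hh h
      by (cases a1; cases a2) (auto simp: dJbb dJww dJwb dJbw split: if_splits)
  next
    fix a1 a2 y0 assume h: "y = a1 # a2 # y0" "c' = rev (a1 # a2 # xr) @ Vac # y0"
    have "H c' = hp (a1 # a2 # xr) y0" using H_eq[of "rev (a1 # a2 # xr)" y0] h assms by simp
    moreover have "a1 \<noteq> Vac" "a2 \<noteq> Vac" using h assms by auto
    ultimately show ?thesis using hh h
      by (cases a1; cases a2) (auto simp: dJbb dJww dJwb dJbw split: if_splits)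
  qed
qed

fun wb :: "nat \<Rightarrow> cell list" where "wb 0 = []" | "wb (Suc k) = Wh # Bk # wb k"
fun bw :: "nat \<Rightarrow> cell list" where "bw 0 = []" | "bw (Suc k) = Bk # Wh # bw k"

lemma wb_concat: "wb k = concat (replicate k [Wh, Bk])" by (induction k) auto
lemma bw_concat: "bw k = concat (replicate k [Bk, Wh])" by (induction k) auto

lemma wb_app[simp]: "wb k @ Wh # Bk # zs = Wh # Bk # wb k @ zs" by (induction k) auto
lemma bw_app[simp]: "bw k @ Bk # Wh # zs = Bk # Wh # bw k @ zs" by (induction k) auto
lemma wb_snoc[simp]: "wb k @ [Wh, Bk] = Wh # Bk # wb k" by (induction k) auto
lemma bw_snoc[simp]: "bw k @ [Bk, Wh] = Bk # Wh # bw k" by (induction k) auto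
lemma rev_wb[simp]: "rev (wb k) = bw k" by (induction k) auto
lemma rev_bw[simp]: "rev (bw k) = wb k" by (induction k) auto
lemma in_wb[simp]: "x \<in> set (wb k) \<longleftrightarrow> k \<noteq> 0 \<and> x \<noteq> Vac" by (induction k) (auto, (cases x; simp)+)
lemma in_bw[simp]: "x \<in> set (bw k) \<longleftrightarrow> k \<noteq> 0 \<and> x \<noteq> Vac" by (induction k) (auto, (cases x; simp)+)

definition G :: "nat \<Rightarrow> nat \<Rightarrow> nat \<Rightarrow> nat \<Rightarrow> cell list" where
  "G p a s r = replicate p Bk @ wb s @ [Vac] @ bw a @ replicate r Wh"
definition E :: "nat \<Rightarrow> nat \<Rightarrow> nat \<Rightarrow> nat \<Rightarrow> cell list" where
  "E p a s r = replicate p Bk @ bw a @ [Vac] @ wb s @ replicate r Wh"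

lemma G_alt: "G p a s r = rev (bw s @ replicate p Bk) @ Vac # (bw a @ replicate r Wh)"
  by (simp add: G_def)
lemma E_alt: "E p a s r = rev (wb a @ replicate p Bk) @ Vac # (wb s @ replicate r Wh)"
  by (simp add: E_def)

lemma FG1: assumes "a \<ge> 1" "tight (G p a s r) c'" shows "c' = G p (a - 1) (s + 1) r"
proof -
  obtain a' where a: "a = Suc a'" using assms(1) by (cases a) auto
  have t: "tight (rev (bw s @ replicate p Bk) @ Vac # (Bk # Wh # bw a' @ replicate r Wh)) c'"
    using assms(2) by (simp add: G_alt a)
  show ?thesis using tight_cases[OF t] by (auto simp: G_def a)
qed

lemma FE1: assumes "a \<ge> 1" "tight (E p a s r) c'" shows "c' = E p (a - 1) (s + 1) r"
proof -
  obtain a' where a: "a = Suc a'" using assms(1) by (cases a) auto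
  have t: "tight (rev (Wh # Bk # wb a' @ replicate p Bk) @ Vac # (wb s @ replicate r Wh)) c'"
    using assms(2) by (simp add: E_alt a)
  show ?thesis using tight_cases[OF t] by (auto simp: E_def a)
qed

lemma wb_shift: "Bk # (wb k @ Wh # zs) = Bk # Wh # (bw k @ zs)"
  by (induction k arbitrary: zs) auto
lemma bw_shift: "Wh # (bw k @ Bk # zs) = Wh # Bk # (wb k @ zs)"
  by (induction k arbitrary: zs) auto

lemma wb_Wh: "wb k @ [Wh] = Wh # bw k" by (induction k) auto
lemma bw_Bk: "bw k @ [Bk] = Bk # wb k" by (induction k) auto

lemma dead_G_SL: assumes "p \<ge> 1" "r \<ge> 1"
  shows "\<not> tight (rev (Wh # bw s' @ replicate p Bk) @ Vac # Bk # replicate r Wh) c''"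
proof
  assume t: "tight (rev (Wh # bw s' @ replicate p Bk) @ Vac # Bk # replicate r Wh) c''"
  obtain p' where p: "p = Suc p'" using assms by (cases p) auto
  obtain r' where r: "r = Suc r'" using assms by (cases r) auto
  show False using tight_cases[OF t] p r by (cases s') auto
qed

lemma dead_G_JR: assumes "Vac \<notin> set xr"
  shows "\<not> tight (rev (Wh # Wh # Bk # xr) @ Vac # replicate r Wh) c''"
proof
  assume t: "tight (rev (Wh # Wh # Bk # xr) @ Vac # replicate r Wh) c''"
  show False using tight_cases[OF t] assms by (cases r) auto
qed

lemma dead_E_SR: assumes "p \<ge> 1" "r \<ge> 1"
  shows "\<not> tight (rev (Wh # replicate p Bk) @ Vac # Bk # wb s' @ replicate r Wh) c''"
proof
  assume t: "tight (rev (Wh # replicate p Bk) @ Vac # Bk # wb s' @ replicate r Wh) c''"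
  obtain p' where p: "p = Suc p'" using assms by (cases p) auto
  obtain r' where r: "r = Suc r'" using assms by (cases r) auto
  show False using tight_cases[OF t] p r by (cases s') auto
qed

lemma dead_E_JL: assumes "Wh \<in> set y" "Vac \<notin> set y"
  shows "\<not> tight (rev (replicate p Bk) @ Vac # Bk # Bk # y) c''"
proof
  assume t: "tight (rev (replicate p Bk) @ Vac # Bk # Bk # y) c''"
  show False using tight_cases[OF t] assms by (cases p) auto
qed

lemma FG0: assumes "p \<ge> 1" "s \<ge> 1" "r \<ge> 1" "tight (G p 0 s r) c'" "tight c' c''"
  shows "c' = E (p - 1) (s + 1) 0 (r - 1)"
proof -
  obtain p' where p: "p = Suc p'" using assms by (cases p) auto
  obtain s' where s: "s = Suc s'" using assms by (cases s) auto
  obtain r' where r: "r = Suc r'" using assms by (cases r) auto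
  have t: "tight (rev (Bk # Wh # bw s' @ replicate p Bk) @ Vac # (Wh # replicate r' Wh)) c'"
    using assms(4) by (simp add: G_alt s r)
  have vx: "Vac \<notin> set (Bk # Wh # bw s' @ replicate p Bk)" "Vac \<notin> set (Wh # replicate r' Wh)" by auto
  show ?thesis using tight_cases[OF t vx]
  proof (elim disjE exE conjE)
    fix xr0 assume h: "Bk # Wh # bw s' @ replicate p Bk = Bk # xr0"
      "c' = rev xr0 @ Vac # Bk # Wh # replicate r' Wh"
    then have "tight (rev (Wh # bw s' @ replicate p Bk) @ Vac # Bk # replicate r Wh) c''"
      using assms(5) r by simp
    then show ?thesis using dead_G_SL assms by blast
  next
    fix y0 assume h: "Wh # replicate r' Wh = Wh # y0"
      "c' = rev (Wh # Bk # Wh # bw s' @ replicate p Bk) @ Vac # y0"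
    then show ?thesis by (simp add: E_def p s r bw_shift wb_Wh)
  next
    fix b xr0 assume "Bk # Wh # bw s' @ replicate p Bk = b # Bk # xr0" then show ?thesis by simp
  next
    fix b y0 assume h: "Wh # replicate r' Wh = b # Wh # y0"
      "c' = rev (b # Wh # Bk # Wh # bw s' @ replicate p Bk) @ Vac # y0"
    then have "b = Wh" "y0 = replicate (r' - 1) Wh" by (cases r'; auto)+
    then have "tight (rev (Wh # Wh # Bk # (Wh # bw s' @ replicate p Bk)) @ Vac # replicate (r' - 1) Wh) c''"
      using assms(5) h by simp
    then show ?thesis using dead_G_JR[of "Wh # bw s' @ replicate p Bk"] by simp
  qed
qed

lemma FE0: assumes "p \<ge> 1" "s \<ge> 1" "r \<ge> 1" "tight (E p 0 s r) c'" "tight c' c''"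
  shows "c' = G (p - 1) (s + 1) 0 (r - 1)"
proof -
  obtain p' where p: "p = Suc p'" using assms by (cases p) auto
  obtain s' where s: "s = Suc s'" using assms by (cases s) auto
  obtain r' where r: "r = Suc r'" using assms by (cases r) auto
  have t: "tight (rev (Bk # replicate p' Bk) @ Vac # (Wh # Bk # wb s' @ replicate r Wh)) c'"
    using assms(4) by (simp add: E_alt s p)
  have vx: "Vac \<notin> set (Bk # replicate p' Bk)" "Vac \<notin> set (Wh # Bk # wb s' @ replicate r Wh)" by auto
  show ?thesis using tight_cases[OF t vx]
  proof (elim disjE exE conjE)
    fix xr0 assume h: "Bk # replicate p' Bk = Bk # xr0"
      "c' = rev xr0 @ Vac # Bk # Wh # Bk # wb s' @ replicate r Wh"
    from h(1) have "xr0 = replicate p' Bk" by simp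
    then show ?thesis using h(2) by (simp add: G_def p s r wb_shift)
  next
    fix y0 assume h: "Wh # Bk # wb s' @ replicate r Wh = Wh # y0"
      "c' = rev (Wh # Bk # replicate p' Bk) @ Vac # y0"
    then have "tight (rev (Wh # replicate p Bk) @ Vac # Bk # wb s' @ replicate r Wh) c''"
      using assms(5) p by simp
    then show ?thesis using dead_E_SR assms by blast
  next
    fix b xr0 assume h: "Bk # replicate p' Bk = b # Bk # xr0"
      "c' = rev xr0 @ Vac # b # Bk # Wh # Bk # wb s' @ replicate r Wh"
    then have "b = Bk" "xr0 = replicate (p' - 1) Bk" by (cases p'; auto)+
    then have "tight (rev (replicate (p' - 1) Bk) @ Vac # Bk # Bk # (Wh # Bk # wb s' @ replicate r Wh)) c''"
      using assms(5) h by simp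
    then show ?thesis using dead_E_JL[of "Wh # Bk # wb s' @ replicate r Wh"] by simp
  next
    fix b y0 assume "Wh # Bk # wb s' @ replicate r Wh = b # Wh # y0" then show ?thesis by simp
  qed
qed



inductive walk :: "cell list \<Rightarrow> cell list \<Rightarrow> nat \<Rightarrow> bool" where
  w0: "walk c c 0"
| wS: "legal_move c c1 \<Longrightarrow> walk c1 c2 k \<Longrightarrow> walk c c2 (Suc k)"

lemma walk_trans: "walk a b k \<Longrightarrow> walk b c l \<Longrightarrow> walk a c (k + l)"
  by (induction rule: walk.induct) (auto intro: wS)

lemma walk_eq: "walk a b k \<Longrightarrow> a = a' \<Longrightarrow> b = b' \<Longrightarrow> k = k' \<Longrightarrow> walk a' b' k'" by simp

lemma walk_list: "walk c c' k \<Longrightarrow> \<exists>p. length p = Suc k \<and> hd p = c \<and> last p = c' \<and> chain p"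
proof (induction rule: walk.induct)
  case (w0 c) then show ?case by (intro exI[of _ "[c]"]) (auto simp: chain_def)
next
  case (wS c c1 c2 k)
  then obtain p where p: "length p = Suc k" "hd p = c1" "last p = c2" "chain p" by blast
  have "chain (c # p)" unfolding chain_def
  proof (intro allI impI)
    fix j assume j: "j + 1 < length (c # p)"
    show "legal_move ((c # p) ! j) ((c # p) ! (j + 1))"
    proof (cases j)
      case 0 then show ?thesis using wS p by (cases p) auto
    next
      case (Suc j') then show ?thesis using p(4) j unfolding chain_def by simp
    qed
  qed
  then show ?case using p by (intro exI[of _ "c # p"]) (auto simp: last_ConsR)
qed

lemma sweepR: "walk (A @ Vac # bw k @ B) (A @ wb k @ Vac # B) k"
proof (induction k arbitrary: A)
  case 0 then show ?case by (simp add: w0)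
next
  case (Suc k)
  have mv: "legal_move (A @ [Vac, Bk, Wh] @ (bw k @ B)) (A @ [Wh, Bk, Vac] @ (bw k @ B))"
    by (rule lm_JR) auto
  have "walk ((A @ [Wh, Bk]) @ Vac # bw k @ B) ((A @ [Wh, Bk]) @ wb k @ Vac # B) k" by (rule Suc.IH)
  then show ?case using mv by (auto intro: wS)
qed

lemma sweepL: "walk (A @ bw k @ Vac # B) (A @ Vac # wb k @ B) k"
proof (induction k arbitrary: B)
  case 0 then show ?case by (simp add: w0)
next
  case (Suc k)
  have mv: "legal_move ((A @ bw k) @ [Bk, Wh, Vac] @ B) ((A @ bw k) @ [Vac, Wh, Bk] @ B)"
    by (rule lm_JL) auto
  have "walk (A @ bw k @ Vac # (Wh # Bk # B)) (A @ Vac # wb k @ (Wh # Bk # B)) k" by (rule Suc.IH)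
  moreover have "A @ bw (Suc k) @ Vac # B = (A @ bw k) @ [Bk, Wh, Vac] @ B"
    by (metis append.assoc append_Cons append_Nil bw.simps(2) bw_snoc)
  ultimately show ?case using mv by (auto intro: wS)
qed

definition K :: "nat \<Rightarrow> nat \<Rightarrow> nat \<Rightarrow> nat \<Rightarrow> nat \<Rightarrow> bool \<Rightarrow> cell list" where
  "K x y z u v od = replicate x Wh @ replicate y Bk @ (if od then Vac # wb z else wb z @ [Vac])
     @ replicate u Wh @ replicate v Bk"

lemma T1: assumes "u \<ge> 1" "y \<ge> 1"
  shows "walk (K x y z u v False) (K x (y - 1) (z + 1) (u - 1) v True) (z + 2)"
proof -
  obtain y' u' where yu: "y = Suc y'" "u = Suc u'" using assms by (cases y; cases u) auto
  define W where "W = replicate x Wh @ replicate y' Bk"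
  define R where "R = replicate u' Wh @ replicate v Bk"
  have k1: "K x y z u v False = (W @ Bk # wb z) @ [Vac, Wh] @ R"
    by (simp add: K_def W_def R_def yu replicate_app_Cons_same)
  have mv: "legal_move ((W @ Bk # wb z) @ [Vac, Wh] @ R) ((W @ Bk # wb z) @ [Wh, Vac] @ R)"
    by (rule lm_SR) auto
  have eq: "(W @ Bk # wb z) @ [Wh, Vac] @ R = W @ bw (Suc z) @ Vac # R"
  proof -
    have "Bk # wb z @ [Wh] = bw (Suc z)" by (simp add: wb_Wh)
    then show ?thesis by (metis append.assoc append_Cons append_Nil)
  qed
  have k2: "K x (y - 1) (z + 1) (u - 1) v True = W @ Vac # wb (Suc z) @ R"
    by (simp add: K_def W_def R_def yu)
  have "walk (W @ bw (Suc z) @ Vac # R) (W @ Vac # wb (Suc z) @ R) (Suc z)" by (rule sweepL)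
  then have "walk (K x y z u v False) (K x (y - 1) (z + 1) (u - 1) v True) (Suc (Suc z))"
    using mv unfolding k1 k2 eq by (rule wS[rotated])
  then show ?thesis by simp
qed

lemma T2: assumes "u \<ge> 1" "y \<ge> 1"
  shows "walk (K x y z u v True) (K x (y - 1) (z + 1) (u - 1) v False) (z + 2)"
proof -
  obtain y' u' where yu: "y = Suc y'" "u = Suc u'" using assms by (cases y; cases u) auto
  define W where "W = replicate x Wh @ replicate y' Bk"
  define R where "R = replicate u' Wh @ replicate v Bk"
  have k1: "K x y z u v True = W @ [Bk, Vac] @ (wb z @ Wh # R)"
    by (simp add: K_def W_def R_def yu replicate_app_Cons_same)
  have mv: "legal_move (W @ [Bk, Vac] @ (wb z @ Wh # R)) (W @ [Vac, Bk] @ (wb z @ Wh # R))"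
    by (rule lm_SL) auto
  have eq: "W @ [Vac, Bk] @ (wb z @ Wh # R) = W @ Vac # bw (Suc z) @ R"
  proof -
    have "Bk # wb z @ [Wh] = bw (Suc z)" by (simp add: wb_Wh)
    then show ?thesis by (metis append.assoc append_Cons append_Nil)
  qed
  have k2: "K x (y - 1) (z + 1) (u - 1) v False = W @ wb (Suc z) @ Vac # R"
    by (simp add: K_def W_def R_def yu)
  have "walk (W @ Vac # bw (Suc z) @ R) (W @ wb (Suc z) @ Vac # R) (Suc z)" by (rule sweepR)
  then have "walk (K x y z u v True) (K x (y - 1) (z + 1) (u - 1) v False) (Suc (Suc z))"
    using mv unfolding k1 k2 eq by (rule wS[rotated])
  then show ?thesis by simp
qed

lemma T3: assumes "y \<ge> 1" "z \<ge> 1"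
  shows "walk (K x y z 0 v False) (K x (y - 1) z 0 (v + 1) True) (z + 1)"
proof -
  obtain y' z' where yz: "y = Suc y'" "z = Suc z'" using assms by (cases y; cases z) auto
  define W where "W = replicate x Wh @ replicate y' Bk"
  define R where "R = replicate v Bk"
  have k1: "K x y z 0 v False = (W @ Bk # wb z' @ [Wh]) @ [Bk, Vac] @ R"
    by (simp add: K_def W_def R_def yz replicate_app_Cons_same)
  have mv: "legal_move ((W @ Bk # wb z' @ [Wh]) @ [Bk, Vac] @ R) ((W @ Bk # wb z' @ [Wh]) @ [Vac, Bk] @ R)"
    by (rule lm_SL) auto
  have eq: "(W @ Bk # wb z' @ [Wh]) @ [Vac, Bk] @ R = W @ bw z @ Vac # (Bk # R)"
  proof -
    have "Bk # wb z' @ [Wh] = bw z" by (simp add: wb_Wh yz)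
    then show ?thesis by (metis append.assoc append_Cons append_Nil)
  qed
  have k2: "K x (y - 1) z 0 (v + 1) True = W @ Vac # wb z @ (Bk # R)"
    by (simp add: K_def W_def R_def yz)
  have "walk (W @ bw z @ Vac # (Bk # R)) (W @ Vac # wb z @ (Bk # R)) z" by (rule sweepL)
  then have "walk (K x y z 0 v False) (K x (y - 1) z 0 (v + 1) True) (Suc z)"
    using mv unfolding k1 k2 eq by (rule wS[rotated])
  then show ?thesis by simp
qed

lemma T4: assumes "y \<ge> 1"
  shows "walk (K x y z 0 v True) (K x (y - 1) z 0 (v + 1) False) (z + 1)"
proof -
  obtain y' where yz: "y = Suc y'" using assms by (cases y) auto
  define W where "W = replicate x Wh @ replicate y' Bk"
  define R where "R = replicate v Bk"
  have k1: "K x y z 0 v True = W @ [Bk, Vac] @ (wb z @ R)"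
    by (simp add: K_def W_def R_def yz replicate_app_Cons_same)
  have mv: "legal_move (W @ [Bk, Vac] @ (wb z @ R)) (W @ [Vac, Bk] @ (wb z @ R))"
    by (rule lm_SL) auto
  have eq: "W @ [Vac, Bk] @ (wb z @ R) = W @ Vac # bw z @ (Bk # R)"
  proof -
    have "Bk # wb z = bw z @ [Bk]" by (simp add: bw_Bk)
    then show ?thesis by (metis append.assoc append_Cons append_Nil)
  qed
  have k2: "K x (y - 1) z 0 (v + 1) False = W @ wb z @ Vac # (Bk # R)"
    by (simp add: K_def W_def R_def yz)
  have "walk (W @ Vac # bw z @ (Bk # R)) (W @ wb z @ Vac # (Bk # R)) z" by (rule sweepR)
  then have "walk (K x y z 0 v True) (K x (y - 1) z 0 (v + 1) False) (Suc z)"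
    using mv unfolding k1 k2 eq by (rule wS[rotated])
  then show ?thesis by simp
qed

lemma T5: assumes "z \<ge> 1"
  shows "walk (K x 0 z 0 v False) (K (x + 1) 0 (z - 1) 0 (v + 1) True) z"
proof -
  obtain z' where yz: "z = Suc z'" using assms by (cases z) auto
  define R where "R = replicate v Bk"
  have k1: "K x 0 z 0 v False = (replicate x Wh @ wb z' @ [Wh]) @ [Bk, Vac] @ R"
    by (simp add: K_def R_def yz)
  have mv: "legal_move ((replicate x Wh @ wb z' @ [Wh]) @ [Bk, Vac] @ R) ((replicate x Wh @ wb z' @ [Wh]) @ [Vac, Bk] @ R)"
    by (rule lm_SL) auto
  have eq: "(replicate x Wh @ wb z' @ [Wh]) @ [Vac, Bk] @ R = replicate (Suc x) Wh @ bw z' @ Vac # (Bk # R)"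
    by (simp add: wb_Wh replicate_app_Cons_same)
  have k2: "K (x + 1) 0 (z - 1) 0 (v + 1) True = replicate (Suc x) Wh @ Vac # wb z' @ (Bk # R)"
    by (simp add: K_def R_def yz)
  have "walk (replicate (Suc x) Wh @ bw z' @ Vac # (Bk # R)) (replicate (Suc x) Wh @ Vac # wb z' @ (Bk # R)) z'" by (rule sweepL)
  then have "walk (K x 0 z 0 v False) (K (x + 1) 0 (z - 1) 0 (v + 1) True) (Suc z')"
    using mv unfolding k1 k2 eq by (rule wS[rotated])
  then show ?thesis by (simp add: yz)
qed

lemma T6: assumes "z \<ge> 1"
  shows "walk (K x 0 z 0 v True) (K (x + 1) 0 (z - 1) 0 (v + 1) False) z"
proof -
  obtain z' where yz: "z = Suc z'" using assms by (cases z) auto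
  define R where "R = replicate v Bk"
  have k1: "K x 0 z 0 v True = replicate x Wh @ [Vac, Wh] @ (Bk # wb z' @ R)"
    by (simp add: K_def R_def yz)
  have mv: "legal_move (replicate x Wh @ [Vac, Wh] @ (Bk # wb z' @ R)) (replicate x Wh @ [Wh, Vac] @ (Bk # wb z' @ R))"
    by (rule lm_SR) auto
  have eq: "replicate x Wh @ [Wh, Vac] @ (Bk # wb z' @ R) = replicate (Suc x) Wh @ Vac # bw z' @ (Bk # R)"
  proof -
    have "Bk # wb z' = bw z' @ [Bk]" by (simp add: bw_Bk)
    then show ?thesis by (simp add: replicate_app_Cons_same)
  qed
  have k2: "K (x + 1) 0 (z - 1) 0 (v + 1) False = replicate (Suc x) Wh @ wb z' @ Vac # (Bk # R)"
    by (simp add: K_def R_def yz)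
  have "walk (replicate (Suc x) Wh @ Vac # bw z' @ (Bk # R)) (replicate (Suc x) Wh @ wb z' @ Vac # (Bk # R)) z'" by (rule sweepR)
  then have "walk (K x 0 z 0 v True) (K (x + 1) 0 (z - 1) 0 (v + 1) False) (Suc z')"
    using mv unfolding k1 k2 eq by (rule wS[rotated])
  then show ?thesis by (simp add: yz)
qed



fun d1 :: "nat \<Rightarrow> nat" where "d1 0 = 0" | "d1 (Suc t) = d1 t + t + 2"
fun d3 :: "nat \<Rightarrow> nat \<Rightarrow> nat" where "d3 m 0 = 0" | "d3 m (Suc k) = d3 m k + (m - k)"

lemma d1_eq: "2 * d1 t = t * (t + 3)" by (induction t) (auto simp: algebra_simps)
lemma d3_eq: "k \<le> m \<Longrightarrow> 2 * d3 m k + k * k = 2 * k * m + k"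
  by (induction k) (auto simp: algebra_simps)

lemma phase1: assumes "m \<le> n" shows "t \<le> m \<Longrightarrow> walk (K 0 n 0 m 0 False) (K 0 (n - t) t (m - t) 0 (odd t)) (d1 t)"
proof (induction t)
  case 0 then show ?case by (simp add: w0)
next
  case (Suc t)
  have IH: "walk (K 0 n 0 m 0 False) (K 0 (n - t) t (m - t) 0 (odd t)) (d1 t)" using Suc by simp
  have st: "walk (K 0 (n - t) t (m - t) 0 (odd t)) (K 0 (n - Suc t) (Suc t) (m - Suc t) 0 (odd (Suc t))) (t + 2)"
  proof (cases "odd t")
    case True
    then show ?thesis using T2[of "m - t" "n - t" 0 t 0] Suc.prems assms by simp
  next
    case False
    then show ?thesis using T1[of "m - t" "n - t" 0 t 0] Suc.prems assms by simp
  qed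
  show ?case using walk_trans[OF IH st] by simp
qed

lemma phase2: assumes "m \<le> n" "1 \<le> m"
  shows "k \<le> n - m \<Longrightarrow> walk (K 0 (n - m) m 0 0 (odd m)) (K 0 (n - m - k) m 0 k (odd (m + k))) (k * (m + 1))"
proof (induction k)
  case 0 then show ?case by (simp add: w0)
next
  case (Suc k)
  have IH: "walk (K 0 (n - m) m 0 0 (odd m)) (K 0 (n - m - k) m 0 k (odd (m + k))) (k * (m + 1))" using Suc by simp
  have st: "walk (K 0 (n - m - k) m 0 k (odd (m + k))) (K 0 (n - m - Suc k) m 0 (Suc k) (odd (m + Suc k))) (m + 1)"
  proof (cases "odd (m + k)")
    case True
    then show ?thesis using T4[of "n - m - k" 0 m k] Suc.prems assms by simp
  next
    case False
    then show ?thesis using T3[of "n - m - k" m 0 k] Suc.prems assms by simp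
  qed
  show ?case using walk_trans[OF IH st] by (simp add: algebra_simps)
qed

lemma phase3: assumes "m \<le> n"
  shows "k \<le> m \<Longrightarrow> walk (K 0 0 m 0 (n - m) (odd n)) (K k 0 (m - k) 0 (n - m + k) (odd (n + k))) (d3 m k)"
proof (induction k)
  case 0 then show ?case by (simp add: w0)
next
  case (Suc k)
  have IH: "walk (K 0 0 m 0 (n - m) (odd n)) (K k 0 (m - k) 0 (n - m + k) (odd (n + k))) (d3 m k)" using Suc by simp
  have st: "walk (K k 0 (m - k) 0 (n - m + k) (odd (n + k))) (K (Suc k) 0 (m - Suc k) 0 (n - m + Suc k) (odd (n + Suc k))) (m - k)"
  proof (cases "odd (n + k)")
    case True
    then show ?thesis using T6[of "m - k" k "n - m + k"] Suc.prems assms by simp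
  next
    case False
    then show ?thesis using T5[of "m - k" k "n - m + k"] Suc.prems assms by simp
  qed
  show ?case using walk_trans[OF IH st] by simp
qed

lemma exists_solution: assumes "1 \<le> m" "m \<le> n"
  shows "\<exists>q. is_solution n m q \<and> length q = n * m + n + m + 1"
proof -
  have w1: "walk (K 0 n 0 m 0 False) (K 0 (n - m) m 0 0 (odd m)) (d1 m)"
    using phase1[OF assms(2), of m] by simp
  have w2: "walk (K 0 (n - m) m 0 0 (odd m)) (K 0 0 m 0 (n - m) (odd n)) ((n - m) * (m + 1))"
    using phase2[OF assms(2) assms(1), of "n - m"] assms by simp
  have w3: "walk (K 0 0 m 0 (n - m) (odd n)) (K m 0 0 0 n (odd (n + m))) (d3 m m)"
    using phase3[OF assms(2), of m] assms by simp
  have w: "walk (K 0 n 0 m 0 False) (K m 0 0 0 n (odd (n + m))) (d1 m + (n - m) * (m + 1) + d3 m m)"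
    using walk_trans[OF walk_trans[OF w1 w2] w3] .
  have len: "d1 m + (n - m) * (m + 1) + d3 m m = n * m + n + m"
  proof -
    have a: "2 * d1 m = m * (m + 3)" by (rule d1_eq)
    have b: "2 * d3 m m + m * m = 2 * m * m + m" using d3_eq[of m m] by simp
    have c: "(n - m) * (m + 1) + m * (m + 1) = n * (m + 1)"
      using assms(2) by (metis add_mult_distrib le_add_diff_inverse2)
    have "2 * (d1 m + (n - m) * (m + 1) + d3 m m) = 2 * (n * m + n + m)"
      using a b c by (simp add: algebra_simps)
    then show ?thesis by simp
  qed
  have I: "K 0 n 0 m 0 False = init_config n m" by (simp add: K_def init_config_def)
  have Fi: "K m 0 0 0 n (odd (n + m)) = final_config n m" by (simp add: K_def final_config_def)
  obtain q where q: "length q = Suc (n * m + n + m)" "hd q = init_config n m" "last q = final_config n m" "chain q"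
    using walk_list[OF w[unfolded len I Fi]] by blast
  have "is_solution n m q" using q unfolding is_solution_def chain_def by auto
  then show ?thesis using q by auto
qed



lemma nb_rep[simp]: "nb (replicate k c) = (if c = Bk then k else 0)" by (induction k) auto
lemma nw_rep[simp]: "nw (replicate k c) = (if c = Wh then k else 0)" by (induction k) auto
lemma inv_rep[simp]: "ninv (replicate k c) = 0" by (induction k) auto
lemma prs_nomem: "b \<notin> set xs \<Longrightarrow> prs a b xs = 0"
  by (induction a b xs rule: prs.induct) auto
lemma prs_rep: "a \<noteq> c \<Longrightarrow> prs a b (replicate k c) = 0"
  by (induction k) (auto simp: prs_Cons)

lemma H_init: assumes "1 \<le> m" "1 \<le> n" shows "H (init_config n m) = int (n * m + n + m)"
proof -
  have "H (init_config n m) = hp (replicate n Bk) (replicate m Wh)"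
    by (simp add: init_config_def H_eq)
  also have "\<dots> = int (n * m + n + m)" using assms
    by (simp add: hp_def prs_rep)
  finally show ?thesis .
qed

lemma H_final: "H (final_config n m) = 0"
proof -
  have "H (final_config n m) = hp (replicate m Wh) (replicate n Bk)"
    by (simp add: final_config_def H_eq)
  also have "\<dots> = 0"
    by (cases m; cases n) (simp_all add: hp_def prs_nomem)
  finally show ?thesis .
qed

lemma gd_init: "gd (init_config n m)"
  unfolding gd_def init_config_def by (intro exI[of _ "replicate n Bk"] exI[of _ "replicate m Wh"]) auto

lemma sol_bound:
  assumes "is_solution n m q" "1 \<le> m" "1 \<le> n"
  shows "n * m + n + m + 1 \<le> length q"
proof -
  have ch: "chain q" and ne: "q \<noteq> []" and h: "hd q = init_config n m" and l: "last q = final_config n m"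
    using assms(1) unfolding is_solution_def chain_def by auto
  have g0: "gd (q ! 0)" using h ne gd_init by (simp add: hd_conv_nth)
  have "\<bar>H (q ! (length q - 1)) - H (q ! 0)\<bar> \<le> int (length q - 1 - 0)"
    using chain_gd_bound[OF ch g0 ne, of "length q - 1" 0] ne by simp
  moreover have "q ! (length q - 1) = final_config n m" using l ne by (simp add: last_conv_nth)
  moreover have "q ! 0 = init_config n m" using h ne by (simp add: hd_conv_nth)
  ultimately have "int (n * m + n + m) \<le> int (length q - 1)" using H_init[OF assms(2,3)] H_final by simp
  then have "n * m + n + m \<le> length q - 1" by (simp only: of_nat_le_iff)
  then show ?thesis using ne by (cases q) auto
qed

lemma opt_props:
  assumes "is_optimal n m p" "1 \<le> m" "m \<le> n"
  shows "length p = n * m + n + m + 1"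
    and "\<And>j. j < length p \<Longrightarrow> H (p ! j) = int (n * m + n + m) - int j"
    and "\<And>j. j + 1 < length p \<Longrightarrow> tight (p ! j) (p ! (j + 1))"
proof -
  let ?L = "n * m + n + m"
  have sol: "is_solution n m p" and mn: "\<forall>q. is_solution n m q \<longrightarrow> length p \<le> length q"
    using assms(1) unfolding is_optimal_def by auto
  obtain q where q: "is_solution n m q" "length q = ?L + 1" using exists_solution assms(2,3) by blast
  have n1: "1 \<le> n" using assms by simp
  show len: "length p = ?L + 1" using mn q sol_bound[OF sol assms(2) n1] by fastforce
  have ch: "chain p" and ne: "p \<noteq> []" and h: "hd p = init_config n m" and l: "last p = final_config n m"
    using sol unfolding is_solution_def chain_def by auto
  have g0: "gd (p ! 0)" using h ne gd_init by (simp add: hd_conv_nth)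
  have p0: "p ! 0 = init_config n m" using h ne by (simp add: hd_conv_nth)
  have pL: "p ! ?L = final_config n m" using l len ne by (simp add: last_conv_nth)
  show Hj: "H (p ! j) = int ?L - int j" if j: "j < length p" for j
  proof -
    have a: "\<bar>H (p ! j) - H (p ! 0)\<bar> \<le> int j" using chain_gd_bound[OF ch g0 ne, of j 0] j by simp
    have b: "\<bar>H (p ! ?L) - H (p ! j)\<bar> \<le> int (?L - j)" using chain_gd_bound[OF ch g0 ne, of ?L j] j len by simp
    show ?thesis using a b p0 pL H_init[OF assms(2) n1] H_final j len by auto
  qed
  show "tight (p ! j) (p ! (j + 1))" if j: "j + 1 < length p" for j
  proof -
    have "legal_move (p ! j) (p ! (j + 1))" using ch j unfolding chain_def by simp
    moreover have "H (p ! (j + 1)) = H (p ! j) - 1" using Hj[of j] Hj[of "j + 1"] j by simp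
    ultimately show ?thesis unfolding tight_def by simp
  qed
qed



fun idx :: "nat \<Rightarrow> nat" where
  "idx 0 = 0" | "idx (Suc 0) = 2" | "idx (Suc (Suc t)) = idx (Suc t) + Suc t + 2"

lemma idx_Suc: "1 \<le> t \<Longrightarrow> idx (Suc t) = idx t + t + 2"
  by (cases t) auto

lemma idx_bound: "1 \<le> t \<Longrightarrow> idx t \<le> t * t + t"
proof (induction t)
  case 0 then show ?case by simp
next
  case (Suc t) then show ?case by (cases "t = 0") (auto simp: idx_Suc)
qed

lemma idx_le: "1 \<le> t \<Longrightarrow> t \<le> u \<Longrightarrow> idx t \<le> idx u"
proof (induction u)
  case 0 then show ?case by simp
next
  case (Suc u) then show ?case by (cases "t = Suc u") (auto simp: idx_Suc)
qed

definition seg :: "nat \<Rightarrow> nat \<Rightarrow> nat \<Rightarrow> nat \<Rightarrow> cell list" where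
  "seg n m t s = (if s = 0 then lam n m t else if odd t then G (n - t - 1) (t + 2 - s) (s - 1) (m - t - 1)
     else E (n - t - 1) (t + 2 - s) (s - 1) (m - t - 1))"

lemma lam_G: "even t \<Longrightarrow> lam n m t = G (n - t) 0 t (m - t)"
  by (simp add: lam_def G_def wb_concat)
lemma lam_E: "odd t \<Longrightarrow> lam n m t = E (n - t) 0 t (m - t)"
  by (simp add: lam_def E_def wb_concat)
lemma xi1_E: "1 \<le> n \<Longrightarrow> xi1 n m = E (n - 1) 1 0 (m - 1)"
  by (cases n) (auto simp: xi1_def E_def replicate_app_Cons_same)

lemma seg_end: assumes "t < m" "m \<le> n" shows "seg n m t (t + 2) = lam n m (t + 1)"
proof (cases "odd t")
  case True
  then have "lam n m (t + 1) = G (n - (t + 1)) 0 (t + 1) (m - (t + 1))" by (intro lam_G) simp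
  then show ?thesis using True by (simp add: seg_def)
next
  case False
  then have "lam n m (t + 1) = E (n - (t + 1)) 0 (t + 1) (m - (t + 1))" by (intro lam_E) simp
  then show ?thesis using False by (simp add: seg_def)
qed

lemma forced:
  assumes "2 \<le> m" "m \<le> n" "is_optimal n m p" "p ! 1 = xi1 n m"
  shows "\<And>t. 1 \<le> t \<Longrightarrow> t \<le> m \<Longrightarrow> p ! idx t = lam n m t"
    and "\<And>t s. 1 \<le> t \<Longrightarrow> t < m \<Longrightarrow> s \<le> t + 2 \<Longrightarrow> p ! (idx t + s) = seg n m t s"
    and "idx m + 1 < length p"
proof -
  let ?L = "n * m + n + m"
  have m1: "1 \<le> m" using assms by simp
  have len: "length p = ?L + 1" using opt_props(1)[OF assms(3) m1 assms(2)] .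
  have T: "\<And>j. j + 1 < length p \<Longrightarrow> tight (p ! j) (p ! (j + 1))"
    using opt_props(3)[OF assms(3) m1 assms(2)] by blast
  have "idx m \<le> m * m + m" using idx_bound m1 by simp
  moreover have "m * m \<le> n * m" using assms(2) by (rule mult_le_mono1)
  moreover have "1 \<le> n" using assms by simp
  ultimately show bnd: "idx m + 1 < length p" using len by linarith
  have seg_ok: "\<And>s. 1 \<le> t \<Longrightarrow> t < m \<Longrightarrow> p ! idx t = lam n m t \<Longrightarrow> s \<le> t + 2 \<Longrightarrow> p ! (idx t + s) = seg n m t s" for t
  proof -
    fix s assume t1: "1 \<le> t" and tm: "t < m" and lt: "p ! idx t = lam n m t"
    have it: "idx t + t + 2 \<le> idx m" using idx_le[of "Suc t" m] tm idx_Suc[OF t1] by simp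
    show "s \<le> t + 2 \<Longrightarrow> p ! (idx t + s) = seg n m t s"
    proof (induction s)
      case 0 then show ?case using lt by (simp add: seg_def)
    next
      case (Suc s)
      have IH: "p ! (idx t + s) = seg n m t s" using Suc by simp
      have t1': "tight (p ! (idx t + s)) (p ! (idx t + s + 1))" using T[of "idx t + s"] Suc.prems it bnd by simp
      show ?case
      proof (cases "s = 0")
        case True
        have t2: "tight (p ! (idx t + s + 1)) (p ! (idx t + s + 1 + 1))"
          using T[of "idx t + s + 1"] True it bnd t1 by simp
        show ?thesis
        proof (cases "odd t")
          case True
          have "p ! (idx t) = E (n - t) 0 t (m - t)" using lt lam_E[OF True] by simp
          then have "p ! (idx t + 1) = G (n - t - 1) (t + 1) 0 (m - t - 1)"
            using FE0[of "n - t" t "m - t"] t1' t2 \<open>s = 0\<close> tm assms(2) t1 by auto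
          then show ?thesis using \<open>s = 0\<close> True by (simp add: seg_def)
        next
          case False
          have "p ! (idx t) = G (n - t) 0 t (m - t)" using lt lam_G False by simp
          then have "p ! (idx t + 1) = E (n - t - 1) (t + 1) 0 (m - t - 1)"
            using FG0[of "n - t" t "m - t"] t1' t2 \<open>s = 0\<close> tm assms(2) t1 by auto
          then show ?thesis using \<open>s = 0\<close> False by (simp add: seg_def)
        qed
      next
        case False
        have sa: "t + 2 - s \<ge> 1" using Suc.prems by simp
        show ?thesis
        proof (cases "odd t")
          case True
          have "p ! (idx t + s) = G (n - t - 1) (t + 2 - s) (s - 1) (m - t - 1)"
            using IH False True by (simp add: seg_def)
          then have "p ! (idx t + s + 1) = G (n - t - 1) (t + 2 - s - 1) (s - 1 + 1) (m - t - 1)"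
            using FG1[OF sa] t1' by simp
          then show ?thesis using False True by (simp add: seg_def)
        next
          case odd: False
          have "p ! (idx t + s) = E (n - t - 1) (t + 2 - s) (s - 1) (m - t - 1)"
            using IH False odd by (simp add: seg_def)
          then have "p ! (idx t + s + 1) = E (n - t - 1) (t + 2 - s - 1) (s - 1 + 1) (m - t - 1)"
            using FE1[OF sa] t1' by simp
          then show ?thesis using False odd by (simp add: seg_def)
        qed
      qed
    qed
  qed
  have lamt: "1 \<le> t \<Longrightarrow> t \<le> m \<Longrightarrow> p ! idx t = lam n m t" for t
  proof (induction t)
    case 0 then show ?case by simp
  next
    case (Suc t)
    show ?case
    proof (cases "t = 0")
      case True
      have "tight (p ! 1) (p ! 2)" using T[of 1] bnd idx_le[of 1 m] m1 by (simp add: numeral_2_eq_2)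
      then have "p ! 2 = E (n - 1) 0 1 (m - 1)" using FE1[of 1 "n - 1" 0 "m - 1"] assms xi1_E[of n m] by simp
      then show ?thesis using True lam_E[of 1 n m] by simp
    next
      case False
      then have t1: "1 \<le> t" by simp
      have lt: "p ! idx t = lam n m t" using Suc False by simp
      have tm: "t < m" using Suc.prems by simp
      have "p ! (idx t + (t + 2)) = seg n m t (t + 2)" using seg_ok[OF t1 tm lt, of "t + 2"] by simp
      then show ?thesis using seg_end[of t m n] Suc.prems assms idx_Suc[OF t1] by (simp add: add.assoc)
    qed
  qed
  show "\<And>t. 1 \<le> t \<Longrightarrow> t \<le> m \<Longrightarrow> p ! idx t = lam n m t" using lamt by blast
  show "\<And>t s. 1 \<le> t \<Longrightarrow> t < m \<Longrightarrow> s \<le> t + 2 \<Longrightarrow> p ! (idx t + s) = seg n m t s"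
    using seg_ok lamt by simp
qed

lemma pos_unique:
  assumes "2 \<le> m" "m \<le> n" "is_optimal n m p" "p ! 1 = xi1 n m"
    "1 \<le> i" "i \<le> m" "a < length p" "p ! a = lam n m i"
  shows "a = idx i"
proof -
  have m1: "1 \<le> m" using assms by simp
  have li: "p ! idx i = lam n m i" using forced(1)[OF assms(1-4) assms(5,6)] .
  have "idx i \<le> idx m" using idx_le assms by simp
  then have ii: "idx i < length p" using forced(3)[OF assms(1-4)] by simp
  have "H (p ! a) = int (n * m + n + m) - int a" using opt_props(2)[OF assms(3) m1 assms(2) assms(7)] .
  moreover have "H (p ! idx i) = int (n * m + n + m) - int (idx i)" using opt_props(2)[OF assms(3) m1 assms(2) ii] .
  ultimately show ?thesis using li assms(8) by simp
qed

theorem lemma8: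
  fixes n m :: nat
  assumes "2 \<le> m" and "m \<le> n"
  shows "(\<forall>p. is_optimal n m p \<and> 1 < length p \<and> p ! 1 = xi1 n m \<longrightarrow>
            (\<exists>k :: nat \<Rightarrow> nat. (\<forall>t\<in>{1..m}. k t < length p \<and> p ! k t = lam n m t) \<and>
                (\<forall>t\<in>{1..<m}. k t < k (t + 1))))
       \<and> (\<forall>p q. is_optimal n m p \<and> 1 < length p \<and> p ! 1 = xi1 n m \<and>
                is_optimal n m q \<and> 1 < length q \<and> q ! 1 = xi1 n m \<longrightarrow>
            (\<forall>i\<in>{1..<m}. \<forall>a a' c c'.
               a \<le> a' \<and> a' < length p \<and> p ! a = lam n m i \<and> p ! a' = lam n m (i + 1) \<and>
               c \<le> c' \<and> c' < length q \<and> q ! c = lam n m i \<and> q ! c' = lam n m (i + 1) \<longrightarrow>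
               take (a' - a + 1) (drop a p) = take (c' - c + 1) (drop c q)))"
proof (intro conjI allI impI)
  fix p assume h: "is_optimal n m p \<and> 1 < length p \<and> p ! 1 = xi1 n m"
  then have op: "is_optimal n m p" and x: "p ! 1 = xi1 n m" by auto
  show "\<exists>k :: nat \<Rightarrow> nat. (\<forall>t\<in>{1..m}. k t < length p \<and> p ! k t = lam n m t) \<and>
                (\<forall>t\<in>{1..<m}. k t < k (t + 1))"
  proof (intro exI[of _ idx] conjI ballI)
    fix t assume t: "t \<in> {1..m}"
    have "idx t \<le> idx m" using idx_le t by simp
    then show "idx t < length p" using forced(3)[OF assms op x] by simp
    show "p ! idx t = lam n m t" using forced(1)[OF assms op x] t by simp
  next
    fix t assume t: "t \<in> {1..<m}"
    then show "idx t < idx (t + 1)" using idx_Suc[of t] by simp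
  qed
next
  fix p q assume h: "is_optimal n m p \<and> 1 < length p \<and> p ! 1 = xi1 n m \<and>
                is_optimal n m q \<and> 1 < length q \<and> q ! 1 = xi1 n m"
  then have op: "is_optimal n m p" and xp: "p ! 1 = xi1 n m"
    and oq: "is_optimal n m q" and xq: "q ! 1 = xi1 n m" by auto
  show "\<forall>i\<in>{1..<m}. \<forall>a a' c c'.
               a \<le> a' \<and> a' < length p \<and> p ! a = lam n m i \<and> p ! a' = lam n m (i + 1) \<and>
               c \<le> c' \<and> c' < length q \<and> q ! c = lam n m i \<and> q ! c' = lam n m (i + 1) \<longrightarrow>
               take (a' - a + 1) (drop a p) = take (c' - c + 1) (drop c q)"
  proof (intro ballI allI impI)
    fix i a a' c c' assume i: "i \<in> {1..<m}" and hh: "a \<le> a' \<and> a' < length p \<and> p ! a = lam n m i \<and> p ! a' = lam n m (i + 1) \<and>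
               c \<le> c' \<and> c' < length q \<and> q ! c = lam n m i \<and> q ! c' = lam n m (i + 1)"
    have i1: "1 \<le> i" "i \<le> m" "1 \<le> i + 1" "i + 1 \<le> m" using i by auto
    have a: "a = idx i" using pos_unique[OF assms op xp i1(1,2)] hh by simp
    have a': "a' = idx (i + 1)" using pos_unique[OF assms op xp i1(3,4)] hh by simp
    have c: "c = idx i" using pos_unique[OF assms oq xq i1(1,2)] hh by simp
    have c': "c' = idx (i + 1)" using pos_unique[OF assms oq xq i1(3,4)] hh by simp
    have d: "idx (i + 1) - idx i + 1 = i + 3" using idx_Suc[of i] i1 by simp
    have lp: "idx i + (i + 3) \<le> length p" using hh a' idx_Suc[of i] i1 by simp
    have lq: "idx i + (i + 3) \<le> length q" using hh c' idx_Suc[of i] i1 by simp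
    have im: "i < m" using i by simp
    show "take (a' - a + 1) (drop a p) = take (c' - c + 1) (drop c q)"
      unfolding a a' c c' d
    proof (rule nth_equalityI)
      show "length (take (i + 3) (drop (idx i) p)) = length (take (i + 3) (drop (idx i) q))"
        using lp lq by simp
    next
      fix s assume s: "s < length (take (i + 3) (drop (idx i) p))"
      then have s3: "s < i + 3" "s \<le> i + 2" by auto
      have "take (i + 3) (drop (idx i) p) ! s = p ! (idx i + s)" using s lp by simp
      also have "\<dots> = seg n m i s" using forced(2)[OF assms op xp i1(1) im s3(2)] .
      also have "\<dots> = q ! (idx i + s)" using forced(2)[OF assms oq xq i1(1) im s3(2)] by simp
      also have "\<dots> = take (i + 3) (drop (idx i) q) ! s" using s3 lq by simp
      finally show "take (i + 3) (drop (idx i) p) ! s = take (i + 3) (drop (idx i) q) ! s" .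
    qed
  qed
qed

end
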